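(* Let \(m\) be a positive integer that is not a perfect square, and let \(a,b,c\) be positive integers with \(\gcd(am,b^2-c^2m)=1\). Then \[Frob(a\sqrt m,\,b+c\sqrt m)=(a\sqrt m-1)(b+c\sqrt m-1)(1+\sqrt m)+\mathbb N[\sqrt m].\]
   Context: \(\mathbb N\) denotes the set of non-negative integers. \(\mathbb Z[\sqrt m]=\{u+v\sqrt m\mid u,v\in\mathbb Z\}\) and \(\mathbb N[\sqrt m]=\{u+v\sqrt m\mid u,v\in\mathbb N\}\). For \(\alpha_1,\alpha_2\in\mathbb Z[\sqrt m]\), \(SG(\alpha_1,\alpha_2)=\{\lambda_1\alpha_1+\lambda_2\alpha_2\mid \lambda_1,\lambda_2\in\mathbb N[\sqrt m]\}\) and \(Frob(\alpha_1,\alpha_2)=\{w\in\mathbb Z[\sqrt m]\mid w+\mathbb N[\sqrt m]\subseteq SG(\alpha_1,\alpha_2)\}\). *)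

theory Defs
  imports Main
begin

text \<open>Elements u + v sqrt m of Z[sqrt m] are represented by pairs (u, v) of integers.
  Since m is not a perfect square, this representation is unique.\<close>

type_synonym zsqrt = "int \<times> int"

definition zs_add :: "zsqrt \<Rightarrow> zsqrt \<Rightarrow> zsqrt" where
  "zs_add x y = (fst x + fst y, snd x + snd y)"

definition zs_mult :: "int \<Rightarrow> zsqrt \<Rightarrow> zsqrt \<Rightarrow> zsqrt" where
  "zs_mult m x y = (fst x * fst y + m * snd x * snd y, fst x * snd y + snd x * fst y)"

definition Nsqrt :: "zsqrt set" where
  "Nsqrt = {(u, v). u \<ge> 0 \<and> v \<ge> 0}"

definition SG :: "int \<Rightarrow> zsqrt \<Rightarrow> zsqrt \<Rightarrow> zsqrt set" where
  "SG m \<alpha>1 \<alpha>2 = {zs_add (zs_mult m l1 \<alpha>1) (zs_mult m l2 \<alpha>2) | l1 l2. l1 \<in> Nsqrt \<and> l2 \<in> Nsqrt}"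

definition Frob :: "int \<Rightarrow> zsqrt \<Rightarrow> zsqrt \<Rightarrow> zsqrt set" where
  "Frob m \<alpha>1 \<alpha>2 = {w. \<forall>n \<in> Nsqrt. zs_add w n \<in> SG m \<alpha>1 \<alpha>2}"

end

theory Submission
  imports Defs
begin

lemma SG_iff:
  "(X, Y) \<in> SG m (0, a) (b, c) \<longleftrightarrow>
   (\<exists>x1 y1 x2 y2. x1 \<ge> 0 \<and> y1 \<ge> 0 \<and> x2 \<ge> 0 \<and> y2 \<ge> 0 \<and>
      X = a*m*y1 + b*x2 + m*c*y2 \<and> Y = a*x1 + c*x2 + b*y2)"
proof
  assume "(X, Y) \<in> SG m (0, a) (b, c)"
  then obtain l1 l2 where l: "(X,Y) = zs_add (zs_mult m l1 (0,a)) (zs_mult m l2 (b,c))"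
    "l1 \<in> Nsqrt" "l2 \<in> Nsqrt" unfolding SG_def by blast
  obtain x1 y1 where 1: "l1 = (x1,y1)" by (cases l1)
  obtain x2 y2 where 2: "l2 = (x2,y2)" by (cases l2)
  show "\<exists>x1 y1 x2 y2. x1 \<ge> 0 \<and> y1 \<ge> 0 \<and> x2 \<ge> 0 \<and> y2 \<ge> 0 \<and>
      X = a*m*y1 + b*x2 + m*c*y2 \<and> Y = a*x1 + c*x2 + b*y2"
    apply (rule exI[of _ x1], rule exI[of _ y1], rule exI[of _ x2], rule exI[of _ y2])
    using l unfolding 1 2 Nsqrt_def zs_add_def zs_mult_def by (auto simp: algebra_simps)
next
  assume "\<exists>x1 y1 x2 y2. x1 \<ge> 0 \<and> y1 \<ge> 0 \<and> x2 \<ge> 0 \<and> y2 \<ge> 0 \<and>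
      X = a*m*y1 + b*x2 + m*c*y2 \<and> Y = a*x1 + c*x2 + b*y2"
  then obtain x1 y1 x2 y2 where h: "x1 \<ge> 0" "y1 \<ge> 0" "x2 \<ge> 0" "y2 \<ge> 0"
      "X = a*m*y1 + b*x2 + m*c*y2" "Y = a*x1 + c*x2 + b*y2" by blast
  have "(X,Y) = zs_add (zs_mult m (x1,y1) (0,a)) (zs_mult m (x2,y2) (b,c))"
    using h unfolding zs_add_def zs_mult_def by (simp add: algebra_simps)
  moreover have "(x1,y1) \<in> Nsqrt" "(x2,y2) \<in> Nsqrt" using h unfolding Nsqrt_def by auto
  ultimately show "(X, Y) \<in> SG m (0, a) (b, c)" unfolding SG_def by blast
qed

lemma uniq:
  fixes a m b c dx dy :: int
  assumes cop: "coprime (a*m) (b^2 - c^2*m)"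
    and h1: "a*m dvd b*dx + m*c*dy" and h2: "a dvd c*dx + b*dy"
  shows "a*m dvd dx \<and> a dvd dy"
proof -
  let ?D = "b^2 - c^2*m"
  have e1: "?D*dy = b*(c*dx + b*dy) - c*(b*dx + m*c*dy)" by (simp add: algebra_simps power2_eq_square)
  have "a dvd b*dx + m*c*dy" using h1 by (metis dvd_mult_left)
  hence "a dvd ?D*dy" unfolding e1 using h2 by (simp add: dvd_diff)
  moreover have "coprime a ?D" using cop by (metis coprime_mult_left_iff)
  ultimately have ady: "a dvd dy" by (metis coprime_dvd_mult_right_iff)
  then obtain k where k: "dy = a*k" by auto
  have "b*dx = (b*dx + m*c*dy) - a*m*(c*k)" using k by (simp add: algebra_simps)
  hence b1: "a*m dvd b*dx" using h1 by (metis dvd_diff dvd_triv_left)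
  have "c*dx = (c*dx + b*dy) - a*(b*k)" using k by (simp add: algebra_simps)
  hence c1: "a dvd c*dx" using h2 by (metis dvd_diff dvd_triv_left)
  have e2: "?D*dx = b*(b*dx) - m*c*(c*dx)" by (simp add: algebra_simps power2_eq_square)
  have "a*m dvd m*c*(c*dx)" using c1 by (metis mult.commute mult_dvd_mono dvd_mult dvd_refl)
  hence "a*m dvd ?D*dx" unfolding e2 using b1 by (simp add: dvd_diff)
  hence "a*m dvd dx" using cop by (metis coprime_dvd_mult_right_iff coprime_commute)
  thus ?thesis using ady by simp
qed

lemma exist:
  fixes a m b c r s :: int
  assumes cop: "coprime (a*m) (b^2 - c^2*m)" and ap: "a > 0" and mp: "m > 0"
  shows "\<exists>x y. 0 \<le> x \<and> x < a*m \<and> 0 \<le> y \<and> y < a \<and>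
      a*m dvd r - (b*x + m*c*y) \<and> a dvd s - (c*x + b*y)"
proof -
  let ?D = "b^2 - c^2*m"
  have "gcd ?D (a*m) = 1" using cop by (simp add: coprime_commute)
  then obtain u v where uv: "u*?D + v*(a*m) = 1" by (metis bezout_int)
  define x0 where "x0 = u*(b*r - m*c*s)"
  define y0 where "y0 = u*(b*s - c*r)"
  define x where "x = x0 mod (a*m)"
  define y where "y = y0 mod a"
  have amp: "a*m > 0" using ap mp by simp
  have uD: "u*?D = 1 - a*m*v" using uv by (simp add: algebra_simps)
  define q1 where "q1 = x0 div (a*m)"
  define q2 where "q2 = y0 div a"
  have xx: "x = x0 - a*m*q1" unfolding x_def q1_def by (simp add: minus_div_mult_eq_mod[symmetric] algebra_simps)
  have yy: "y = y0 - a*q2" unfolding y_def q2_def by (simp add: minus_div_mult_eq_mod[symmetric] algebra_simps)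
  have "b*x0 + m*c*y0 = (u*?D)*r" unfolding x0_def y0_def by (simp add: algebra_simps power2_eq_square)
  also have "... = r - a*m*(v*r)" unfolding uD by (simp add: algebra_simps)
  finally have E1: "b*x0 + m*c*y0 = r - a*m*(v*r)" .
  have "c*x0 + b*y0 = (u*?D)*s" unfolding x0_def y0_def by (simp add: algebra_simps power2_eq_square)
  also have "... = s - a*m*(v*s)" unfolding uD by (simp add: algebra_simps)
  finally have E2: "c*x0 + b*y0 = s - a*m*(v*s)" .
  have "r - (b*x + m*c*y) = r - (b*x0 + m*c*y0) + a*m*(b*q1 + c*q2)"
    unfolding xx yy by (simp add: algebra_simps)
  also have "... = a*m*(v*r + b*q1 + c*q2)" unfolding E1 by (simp add: algebra_simps)
  finally have d1: "a*m dvd r - (b*x + m*c*y)" by simp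
  have "s - (c*x + b*y) = s - (c*x0 + b*y0) + a*(c*m*q1 + b*q2)"
    unfolding xx yy by (simp add: algebra_simps)
  also have "... = a*(m*(v*s) + c*m*q1 + b*q2)" unfolding E2 by (simp add: algebra_simps)
  finally have d2: "a dvd s - (c*x + b*y)" by simp
  have "0 \<le> x" "x < a*m" unfolding x_def using amp by auto
  moreover have "0 \<le> y" "y < a" unfolding y_def using ap by auto
  ultimately show ?thesis using d1 d2 by blast
qed

lemma inSG:
  fixes m a b c X Y :: int
  assumes cop: "coprime (a*m) (b^2 - c^2*m)" and ap: "a > 0" and mp: "m > 0"
    and bp: "b > 0" and cp: "c > 0"
    and X: "X \<ge> m*c*(a-1) + (a*m-1)*(b-1)" and Y: "Y \<ge> c*(a*m-1) + (a-1)*(b-1)"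
  shows "(X, Y) \<in> SG m (0, a) (b, c)"
proof -
  obtain x y where xy: "0 \<le> x" "x < a*m" "0 \<le> y" "y < a"
     "a*m dvd X - (b*x + m*c*y)" "a dvd Y - (c*x + b*y)"
    using exist[OF cop ap mp] by blast
  obtain k1 where k1: "X - (b*x + m*c*y) = a*m*k1" using xy(5) by (auto elim: dvdE)
  obtain k2 where k2: "Y - (c*x + b*y) = a*k2" using xy(6) by (auto elim: dvdE)
  have "b*x \<le> b*(a*m-1)" using xy bp by (intro mult_left_mono) auto
  moreover have "m*c*y \<le> m*c*(a-1)" using xy mp cp by (intro mult_left_mono) auto
  ultimately have "a*m*k1 > - (a*m)" using k1 X by (simp add: algebra_simps)
  hence "a*m*(k1+1) > 0" by (simp add: algebra_simps)
  hence "k1 + 1 > 0" using mult_pos_pos[OF ap mp] by (simp add: zero_less_mult_iff)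
  hence k1p: "k1 \<ge> 0" by linarith
  have "c*x \<le> c*(a*m-1)" using xy cp by (intro mult_left_mono) auto
  moreover have "b*y \<le> b*(a-1)" using xy bp by (intro mult_left_mono) auto
  ultimately have "a*k2 > - a" using k2 Y by (simp add: algebra_simps)
  hence "a*(k2+1) > 0" by (simp add: algebra_simps)
  hence k2p: "k2 \<ge> 0" using ap by (simp add: zero_less_mult_iff)
  show ?thesis unfolding SG_iff
    apply (rule exI[of _ k2], rule exI[of _ k1], rule exI[of _ x], rule exI[of _ y])
    using k1 k2 k1p k2p xy by (simp add: algebra_simps)
qed

lemma notSG:
  fixes m a b c X Y :: int
  assumes cop: "coprime (a*m) (b^2 - c^2*m)" and ap: "a > 0" and mp: "m > 0"
    and bp: "b > 0" and cp: "c > 0"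
    and X: "a*m dvd X - (b*(a*m-1) + m*c*(a-1))" and Y: "a dvd Y - (c*(a*m-1) + b*(a-1))"
    and S: "(X, Y) \<in> SG m (0, a) (b, c)"
  shows "X \<ge> b*(a*m-1) + m*c*(a-1) \<and> Y \<ge> c*(a*m-1) + b*(a-1)"
proof -
  obtain x1 y1 x2 y2 where h: "x1 \<ge> 0" "y1 \<ge> 0" "x2 \<ge> 0" "y2 \<ge> 0"
      "X = a*m*y1 + b*x2 + m*c*y2" "Y = a*x1 + c*x2 + b*y2" using S unfolding SG_iff by blast
  define dx where "dx = x2 - (a*m-1)"
  define dy where "dy = y2 - (a-1)"
  have "b*dx + m*c*dy = (X - (b*(a*m-1) + m*c*(a-1))) - a*m*y1"
    unfolding dx_def dy_def h by (simp add: algebra_simps)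
  hence d1: "a*m dvd b*dx + m*c*dy" using X by (simp add: dvd_diff)
  have "c*dx + b*dy = (Y - (c*(a*m-1) + b*(a-1))) - a*x1"
    unfolding dx_def dy_def h by (simp add: algebra_simps)
  hence d2: "a dvd c*dx + b*dy" using Y by (simp add: dvd_diff)
  from uniq[OF cop d1 d2] obtain k j where kj: "dx = a*m*k" "dy = a*j" by (auto elim!: dvdE)
  have "a*m*(k+1) > 0" using h(3) kj(1) unfolding dx_def by (simp add: algebra_simps)
  hence "k + 1 > 0" using mult_pos_pos[OF ap mp] by (simp add: zero_less_mult_iff)
  hence kp: "k \<ge> 0" by linarith
  have "a*(j+1) > 0" using h(4) kj(2) unfolding dy_def by (simp add: algebra_simps)
  hence jp: "j \<ge> 0" using ap by (simp add: zero_less_mult_iff)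
  have dxp: "dx \<ge> 0" using kj kp ap mp by simp
  have dyp: "dy \<ge> 0" using kj jp ap by simp
  have "b*dx \<ge> 0" "m*c*dy \<ge> 0" "c*dx \<ge> 0" "b*dy \<ge> 0" using dxp dyp bp cp mp by auto
  moreover have "a*m*y1 \<ge> 0" "a*x1 \<ge> 0" using h ap mp by auto
  ultimately show ?thesis unfolding h using dx_def dy_def by (simp add: algebra_simps)
qed

lemma Fval: "zs_mult m (zs_mult m (-1, a) (b - 1, c)) (1, 1) =
   (m*c*(a-1) + (a*m-1)*(b-1), c*(a*m-1) + (a-1)*(b-1))"
  unfolding zs_mult_def by (simp add: algebra_simps)

theorem theorem4:
  fixes m a b c :: int
  assumes "m > 0" and "\<not> (\<exists>k::int. k ^ 2 = m)"
    and "a > 0" and "b > 0" and "c > 0"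
    and "gcd (a * m) (b ^ 2 - c ^ 2 * m) = 1"
  shows "Frob m (0, a) (b, c) =
    {zs_add (zs_mult m (zs_mult m (-1, a) (b - 1, c)) (1, 1)) n | n. n \<in> Nsqrt}"
proof -
  have cop: "coprime (a*m) (b^2 - c^2*m)" using assms(6) by (simp add: coprime_iff_gcd_eq_1)
  define F1 where "F1 = m*c*(a-1) + (a*m-1)*(b-1)"
  define F2 where "F2 = c*(a*m-1) + (a-1)*(b-1)"
  have R: "{zs_add (zs_mult m (zs_mult m (-1, a) (b - 1, c)) (1, 1)) n | n. n \<in> Nsqrt}
     = {(X,Y). X \<ge> F1 \<and> Y \<ge> F2}"
  proof (rule set_eqI, rule iffI)
    fix z assume "z \<in> {zs_add (zs_mult m (zs_mult m (-1, a) (b - 1, c)) (1, 1)) n | n. n \<in> Nsqrt}"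
    thus "z \<in> {(X,Y). X \<ge> F1 \<and> Y \<ge> F2}" unfolding Fval F1_def F2_def zs_add_def Nsqrt_def by auto
  next
    fix z assume "z \<in> {(X,Y). X \<ge> F1 \<and> Y \<ge> F2}"
    then obtain X Y where z: "z = (X,Y)" "X \<ge> F1" "Y \<ge> F2" by auto
    have "z = zs_add (zs_mult m (zs_mult m (-1, a) (b - 1, c)) (1, 1)) (X - F1, Y - F2)"
      unfolding Fval z F1_def F2_def zs_add_def by simp
    moreover have "(X - F1, Y - F2) \<in> Nsqrt" using z unfolding Nsqrt_def by simp
    ultimately show "z \<in> {zs_add (zs_mult m (zs_mult m (-1, a) (b - 1, c)) (1, 1)) n | n. n \<in> Nsqrt}" by blast
  qed
  show ?thesis unfolding R
  proof (rule set_eqI, rule iffI)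
    fix w assume w: "w \<in> Frob m (0, a) (b, c)"
    obtain w1 w2 where ww: "w = (w1, w2)" by (cases w)
    define B1 where "B1 = b*(a*m-1) + m*c*(a-1)"
    define B2 where "B2 = c*(a*m-1) + b*(a-1)"
    have B1F: "B1 = F1 + a*m - 1" unfolding B1_def F1_def by (simp add: algebra_simps)
    have B2F: "B2 = F2 + a - 1" unfolding B2_def F2_def by (simp add: algebra_simps)
    have amp: "a*m > 0" using assms by simp
    have w1: "w1 \<ge> F1"
    proof (rule ccontr)
      assume "\<not> w1 \<ge> F1"
      define t where "t = \<bar>w2\<bar> + \<bar>B2\<bar>"
      have "a*t \<ge> t" using mult_right_mono[of 1 a t] assms(3) unfolding t_def by simp
      hence n2: "B2 + a*t - w2 \<ge> 0" unfolding t_def by linarith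
      have "(F1 - 1 - w1, B2 + a*t - w2) \<in> Nsqrt" using n2 \<open>\<not> w1 \<ge> F1\<close> unfolding Nsqrt_def by simp
      hence "zs_add w (F1 - 1 - w1, B2 + a*t - w2) \<in> SG m (0, a) (b, c)"
        using w unfolding Frob_def by blast
      hence S: "(F1 - 1, B2 + a*t) \<in> SG m (0, a) (b, c)" unfolding ww zs_add_def by simp
      have "F1 - 1 - B1 = a*m*(-1)" unfolding B1F by simp
      hence "a*m dvd (F1 - 1) - B1" by (metis dvd_triv_left)
      moreover have "a dvd (B2 + a*t) - B2" by simp
      ultimately have "F1 - 1 \<ge> B1" using notSG[OF cop assms(3,1,4,5) _ _ S]
        unfolding B1_def B2_def by blast
      thus False using B1F amp by simp
    qed
    have w2: "w2 \<ge> F2"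
    proof (rule ccontr)
      assume "\<not> w2 \<ge> F2"
      define t where "t = \<bar>w1\<bar> + \<bar>B1\<bar>"
      have "a*m*t \<ge> t" using mult_right_mono[of 1 "a*m" t] amp unfolding t_def by simp
      hence n1: "B1 + a*m*t - w1 \<ge> 0" unfolding t_def by linarith
      have "(B1 + a*m*t - w1, F2 - 1 - w2) \<in> Nsqrt" using n1 \<open>\<not> w2 \<ge> F2\<close> unfolding Nsqrt_def by simp
      hence "zs_add w (B1 + a*m*t - w1, F2 - 1 - w2) \<in> SG m (0, a) (b, c)"
        using w unfolding Frob_def by blast
      hence S: "(B1 + a*m*t, F2 - 1) \<in> SG m (0, a) (b, c)" unfolding ww zs_add_def by simp
      have "F2 - 1 - B2 = a*(-1)" unfolding B2F by simp
      hence "a dvd (F2 - 1) - B2" by (metis dvd_triv_left)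
      moreover have "a*m dvd (B1 + a*m*t) - B1" by simp
      ultimately have "F2 - 1 \<ge> B2" using notSG[OF cop assms(3,1,4,5) _ _ S]
        unfolding B1_def B2_def by blast
      thus False using B2F assms(3) by simp
    qed
    show "w \<in> {(X,Y). X \<ge> F1 \<and> Y \<ge> F2}" using w1 w2 ww by simp
  next
    fix w assume "w \<in> {(X,Y). X \<ge> F1 \<and> Y \<ge> F2}"
    then obtain X Y where w: "w = (X,Y)" "X \<ge> F1" "Y \<ge> F2" by auto
    show "w \<in> Frob m (0, a) (b, c)" unfolding Frob_def
    proof
      show "\<forall>n\<in>Nsqrt. zs_add w n \<in> SG m (0, a) (b, c)"
      proof
        fix n assume "n \<in> Nsqrt"
        then obtain n1 n2 where n: "n = (n1,n2)" "n1 \<ge> 0" "n2 \<ge> 0" unfolding Nsqrt_def by auto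
        have "(X + n1, Y + n2) \<in> SG m (0, a) (b, c)"
          using inSG[OF cop assms(3,1,4,5)] w n unfolding F1_def F2_def by simp
        thus "zs_add w n \<in> SG m (0, a) (b, c)" unfolding w n zs_add_def by simp
      qed
    qed
  qed
qed

end
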